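(* Let $A\in\mathcal{PM}(n)$. A row vector $v\in\{0,1\}^n$ is a poset vector of $A$ if and only if $vA=v$, where the product is the Boolean matrix product. Equivalently, the set of order ideals of $P_A$ equals $\{\mathrm{supp}(v): v\in\{0,1\}^n,\ vA=v\}$.
   Context: Let $X_n=\{0,1,\ldots,n-1\}$. A naturally labeled (NL) poset on $X_n$ is a partial order $\preceq$ on $X_n$ such that $x\preceq y$ implies $x\le y$ in the usual integer order. Its poset matrix is the $n\times n$ $(0,1)$-matrix $A=(a_{i,j})_{i,j\in X_n}$ with $a_{i,j}=1$ if $j\preceq i$ and $0$ otherwise; $\mathcal{PM}(n)$ is the set of all such matrices and $P_A$ the NL poset with poset matrix $A$. Boolean arithmetic: $1+1=1$, so $(vA)_j=\max_i v_ia_{i,j}$. For $v\in\{0,1\}^n$, $A^v=\begin{bmatrix}A&\mathbf{0}\\ v&1\end{bmatrix}$, and $v$ is a poset vector of $A$ if $A^v\in\mathcal{PM}(n+1)$. $\mathrm{supp}(v)=\{j: v_j=1\}$; an order ideal is a downward closed subset. *)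

theory Defs
  imports Main
begin

text \<open>Matrices over {0,1} are represented as nat \<Rightarrow> nat \<Rightarrow> bool (True = 1),
  row vectors as nat \<Rightarrow> bool; only indices in X_n = {0..<n} are meaningful.\<close>

definition NL_poset :: "nat \<Rightarrow> (nat \<Rightarrow> nat \<Rightarrow> bool) \<Rightarrow> bool" where
  "NL_poset n le \<longleftrightarrow>
     (\<forall>x<n. le x x) \<and>
     (\<forall>x<n. \<forall>y<n. le x y \<and> le y x \<longrightarrow> x = y) \<and>
     (\<forall>x<n. \<forall>y<n. \<forall>z<n. le x y \<and> le y z \<longrightarrow> le x z) \<and>
     (\<forall>x<n. \<forall>y<n. le x y \<longrightarrow> x \<le> y)"

definition is_PM :: "nat \<Rightarrow> (nat \<Rightarrow> nat \<Rightarrow> bool) \<Rightarrow> bool" where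
  "is_PM n A \<longleftrightarrow> (\<exists>le. NL_poset n le \<and> (\<forall>i<n. \<forall>j<n. A i j = le j i))"

definition poset_of :: "(nat \<Rightarrow> nat \<Rightarrow> bool) \<Rightarrow> nat \<Rightarrow> nat \<Rightarrow> bool" where
  "poset_of A x y = A y x"

text \<open>A^v = [[A, 0], [v, 1]], an (n+1)\<times>(n+1) matrix.\<close>
definition ext_mat :: "nat \<Rightarrow> (nat \<Rightarrow> nat \<Rightarrow> bool) \<Rightarrow> (nat \<Rightarrow> bool) \<Rightarrow> nat \<Rightarrow> nat \<Rightarrow> bool" where
  "ext_mat n A v i j =
     (if i < n \<and> j < n then A i j
      else if i = n \<and> j < n then v j
      else if i < n \<and> j = n then False
      else True)"

definition poset_vector :: "nat \<Rightarrow> (nat \<Rightarrow> nat \<Rightarrow> bool) \<Rightarrow> (nat \<Rightarrow> bool) \<Rightarrow> bool" where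
  "poset_vector n A v \<longleftrightarrow> is_PM (Suc n) (ext_mat n A v)"

definition bvecmat :: "nat \<Rightarrow> (nat \<Rightarrow> bool) \<Rightarrow> (nat \<Rightarrow> nat \<Rightarrow> bool) \<Rightarrow> nat \<Rightarrow> bool" where
  "bvecmat n v A j \<longleftrightarrow> (\<exists>i<n. v i \<and> A i j)"

definition supp :: "nat \<Rightarrow> (nat \<Rightarrow> bool) \<Rightarrow> nat set" where
  "supp n v = {j. j < n \<and> v j}"

definition order_ideal :: "nat \<Rightarrow> (nat \<Rightarrow> nat \<Rightarrow> bool) \<Rightarrow> nat set \<Rightarrow> bool" where
  "order_ideal n A I \<longleftrightarrow> I \<subseteq> {0..<n} \<and>
     (\<forall>x\<in>I. \<forall>y<n. poset_of A y x \<longrightarrow> y \<in> I)"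

end

theory Submission
  imports Defs
begin

lemma pv_iff:
  assumes "is_PM n A"
  shows "poset_vector n A v \<longleftrightarrow> (\<forall>i<n. \<forall>j<n. v i \<and> A i j \<longrightarrow> v j)"
proof -
  obtain le where le: "NL_poset n le" and Ale: "\<forall>i<n. \<forall>j<n. A i j = le j i"
    using assms unfolding is_PM_def by blast
  show ?thesis
  proof
    assume "poset_vector n A v"
    then obtain le' where P: "NL_poset (Suc n) le'"
      and E: "\<forall>i<Suc n. \<forall>j<Suc n. ext_mat n A v i j = le' j i"
      unfolding poset_vector_def is_PM_def by blast
    show "\<forall>i<n. \<forall>j<n. v i \<and> A i j \<longrightarrow> v j"
    proof (intro allI impI)
      fix i j assume ij: "i < n" "j < n" "v i \<and> A i j"
      have 1: "le' j i" using E[rule_format, of i j] ij by (auto simp: ext_mat_def)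
      have 2: "le' i n" using E[rule_format, of n i] ij by (auto simp: ext_mat_def)
      have "le' j n" using P 1 2 ij unfolding NL_poset_def
        by (meson less_Suc_eq lessI)
      then show "v j" using E[rule_format, of n j] ij by (auto simp: ext_mat_def)
    qed
  next
    assume C: "\<forall>i<n. \<forall>j<n. v i \<and> A i j \<longrightarrow> v j"
    define le' where "le' x y = ext_mat n A v y x" for x y
    have lr: "\<forall>x<n. le x x" and la: "\<forall>x<n. \<forall>y<n. le x y \<and> le y x \<longrightarrow> x = y"
      and lt: "\<forall>x<n. \<forall>y<n. \<forall>z<n. le x y \<and> le y z \<longrightarrow> le x z"
      and ln: "\<forall>x<n. \<forall>y<n. le x y \<longrightarrow> x \<le> y"
      using le unfolding NL_poset_def by blast+
    have L: "x < Suc n \<Longrightarrow> y < Suc n \<Longrightarrow> le' x y = (if x < n \<and> y < n then le x y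
       else if y = n \<and> x < n then v x else if x = n \<and> y < n then False else True)" for x y
      unfolding le'_def ext_mat_def using Ale by auto
    have L1: "x < n \<Longrightarrow> y < n \<Longrightarrow> le' x y = le x y" for x y using L[of x y] by simp
    have L2: "x < n \<Longrightarrow> le' x n = v x" for x using L[of x n] by simp
    have L3: "y < n \<Longrightarrow> le' n y = False" for y using L[of n y] by simp
    have L4: "le' n n" using L[of n n] by simp
    have sp: "x < Suc n \<Longrightarrow> x < n \<or> x = n" for x by auto
    have "NL_poset (Suc n) le'"
      unfolding NL_poset_def
    proof (intro conjI allI impI)
      fix x assume "x < Suc n" then show "le' x x" using L1 L4 lr sp by blast
    next
      fix x y assume "x < Suc n" "y < Suc n" "le' x y \<and> le' y x"
      then show "x = y" using sp[of x] sp[of y] L1 L2 L3 la by metis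
    next
      fix x y z assume a: "x < Suc n" "y < Suc n" "z < Suc n" "le' x y \<and> le' y z"
      have xy: "le' x y" and yz: "le' y z" using a(4) by auto
      show "le' x z"
      proof (cases "z < n")
        case True
        have y: "y < n" using sp[OF a(2)] yz L3 True by blast
        have x: "x < n" using sp[OF a(1)] xy L3 y by blast
        have "le x y" "le y z" using xy yz L1 x y True by auto
        then have "le x z" using lt x y True by blast
        then show ?thesis using L1 x True by simp
      next
        case False
        then have z: "z = n" using a(3) by simp
        show ?thesis
        proof (cases "y < n")
          case False
          then have "y = n" using a(2) by simp
          then show ?thesis using xy z by simp
        next
          case True
          have vy: "v y" using yz z L2 True by simp
          have x: "x < n" using sp[OF a(1)] xy L3 True by blast
          have "le x y" using xy L1 x True by simp
          then have "A y x" using Ale x True by simp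
          then have "v x" using C vy x True by blast
          then show ?thesis using L2 x z by simp
        qed
      qed
    next
      fix x y assume "x < Suc n" "y < Suc n" "le' x y"
      then show "x \<le> y" using sp[of x] sp[of y] L1 L2 L3 ln by (metis order_refl less_imp_le)
    qed
    then show "poset_vector n A v"
      unfolding poset_vector_def is_PM_def le'_def by blast
  qed
qed

lemma fix_iff:
  assumes "is_PM n A"
  shows "(\<forall>j<n. bvecmat n v A j = v j) \<longleftrightarrow> (\<forall>i<n. \<forall>j<n. v i \<and> A i j \<longrightarrow> v j)"
proof -
  obtain le where le: "NL_poset n le" and Ale: "\<forall>i<n. \<forall>j<n. A i j = le j i"
    using assms unfolding is_PM_def by blast
  have lr: "\<forall>x<n. le x x" using le unfolding NL_poset_def by blast
  have refl: "\<forall>j<n. A j j" using lr Ale by simp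
  show ?thesis
  proof
    assume H: "\<forall>j<n. bvecmat n v A j = v j"
    show "\<forall>i<n. \<forall>j<n. v i \<and> A i j \<longrightarrow> v j"
    proof (intro allI impI)
      fix i j assume "i < n" "j < n" "v i \<and> A i j"
      then have "bvecmat n v A j" unfolding bvecmat_def by blast
      then show "v j" using H \<open>j < n\<close> by simp
    qed
  next
    assume H: "\<forall>i<n. \<forall>j<n. v i \<and> A i j \<longrightarrow> v j"
    show "\<forall>j<n. bvecmat n v A j = v j"
    proof (intro allI impI)
      fix j assume j: "j < n"
      show "bvecmat n v A j = v j"
      proof
        assume "bvecmat n v A j"
        then obtain i where "i < n" "v i" "A i j" unfolding bvecmat_def by blast
        then show "v j" using H j by blast
      next
        assume "v j"
        then show "bvecmat n v A j" unfolding bvecmat_def using refl j by blast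
      qed
    qed
  qed
qed

theorem theorem5p3:
  fixes n :: nat and A :: "nat \<Rightarrow> nat \<Rightarrow> bool"
  assumes "is_PM n A"
  shows "(\<forall>v. poset_vector n A v \<longleftrightarrow> (\<forall>j<n. bvecmat n v A j = v j))
       \<and> {I. order_ideal n A I} = {supp n v | v. \<forall>j<n. bvecmat n v A j = v j}"
proof
  show "\<forall>v. poset_vector n A v \<longleftrightarrow> (\<forall>j<n. bvecmat n v A j = v j)"
    by (simp only: pv_iff[OF assms] fix_iff[OF assms] simp_thms)
  show "{I. order_ideal n A I} = {supp n v | v. \<forall>j<n. bvecmat n v A j = v j}"
  proof
    show "{I. order_ideal n A I} \<subseteq> {supp n v | v. \<forall>j<n. bvecmat n v A j = v j}"
    proof
      fix I assume "I \<in> {I. order_ideal n A I}"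
      then have I: "order_ideal n A I" by simp
      define v where "v j = (j \<in> I)" for j
      have "supp n v = I" using I unfolding supp_def v_def order_ideal_def by auto
      moreover have "\<forall>j<n. bvecmat n v A j = v j"
        unfolding fix_iff[OF assms] using I unfolding order_ideal_def poset_of_def v_def by blast
      ultimately show "I \<in> {supp n v | v. \<forall>j<n. bvecmat n v A j = v j}" by blast
    qed
    show "{supp n v | v. \<forall>j<n. bvecmat n v A j = v j} \<subseteq> {I. order_ideal n A I}"
    proof
      fix I assume "I \<in> {supp n v | v. \<forall>j<n. bvecmat n v A j = v j}"
      then obtain v where I: "I = supp n v" and H: "\<forall>j<n. bvecmat n v A j = v j" by blast
      have C: "\<forall>i<n. \<forall>j<n. v i \<and> A i j \<longrightarrow> v j" using fix_iff[OF assms, of v, THEN iffD1, OF H] .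
      have "order_ideal n A I" unfolding order_ideal_def poset_of_def
      proof (intro conjI ballI allI impI)
        show "I \<subseteq> {0..<n}" unfolding I supp_def by auto
      next
        fix x y assume "x \<in> I" "y < n" "A x y"
        then show "y \<in> I" using C unfolding I supp_def by blast
      qed
      then show "I \<in> {I. order_ideal n A I}" by simp
    qed
  qed
qed

end
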